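(* Let $A$ be a nonzero commutative nilpotent $\mathbb{F}_p$-algebra of finite dimension with $A^e\ne0$, $A^{e+1}=0$. For $1\le r\le e$ let $t_r=\dim_{\mathbb{F}_p}(N_r/N_{r-1})$. Then the number $i(A)$ of ideals of $A$ satisfies \[ i(A)\ge \lambda(A):=s(t_1)+\sum_{r=2}^{e}\bigl(s(t_r)-1\bigr), \] where $s(m)$ denotes the number of subspaces of an $m$-dimensional $\mathbb{F}_p$-vector space.
   Context: Algebras are commutative, associative, not necessarily unital. $N_k=\{a\in A: x_1\cdots x_k a=0\ \forall x_1,\dots,x_k\in A\}$, $N_0=0$, so $0\subset N_1\subset\cdots\subset N_e=A$. *)

theory Defs
  imports Complex_Main "HOL-Computational_Algebra.Primes"
begin

(* A commutative associative (not necessarily unital) algebra over a field 'k is modelled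
   as a type 'a :: comm_ring together with a scalar multiplication sc making 'a a
   'k-vector space, compatible with the multiplication. *)

definition is_algebra :: "('k::field \<Rightarrow> 'a::comm_ring \<Rightarrow> 'a) \<Rightarrow> bool" where
  "is_algebra sc \<longleftrightarrow> vector_space sc \<and> (\<forall>c x y. sc c (x * y) = x * sc c y)"

definition alg_ideal :: "('k::field \<Rightarrow> 'a::comm_ring \<Rightarrow> 'a) \<Rightarrow> 'a set \<Rightarrow> bool" where
  "alg_ideal sc I \<longleftrightarrow> module.subspace sc I \<and> (\<forall>a\<in>I. \<forall>x. x * a \<in> I)"

(* N_k = {a. x_1 ... x_k a = 0 for all x_i}, N_0 = 0 *)
fun annN :: "nat \<Rightarrow> 'a::comm_ring set" where
  "annN 0 = {0}"
| "annN (Suc k) = {a. \<forall>x. x * a \<in> annN k}"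

(* powers A^k (k \<ge> 1): A^1 = A, A^(k+1) = span of products x*y with y \<in> A^k;
   the value at 0 is a convention and is never used *)
fun alg_pow :: "('k::field \<Rightarrow> 'a::comm_ring \<Rightarrow> 'a) \<Rightarrow> nat \<Rightarrow> 'a set" where
  "alg_pow sc 0 = UNIV"
| "alg_pow sc (Suc 0) = UNIV"
| "alg_pow sc (Suc (Suc k)) = module.span sc {x * y | x y. y \<in> alg_pow sc (Suc k)}"

definition num_subspaces :: "'k::field itself \<Rightarrow> nat \<Rightarrow> nat" where
  "num_subspaces _ m = card {W :: (nat \<Rightarrow> 'k) set.
      W \<subseteq> {v. \<forall>i\<ge>m. v i = 0} \<and> (\<lambda>i. 0) \<in> W \<and>
      (\<forall>v\<in>W. \<forall>w\<in>W. (\<lambda>i. v i + w i) \<in> W) \<and>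
      (\<forall>c. \<forall>v\<in>W. (\<lambda>i. c * v i) \<in> W)}"

end

theory Submission
  imports Defs "HOL-Library.FuncSet"
begin

context vector_space begin

lemma count_between:
  assumes U: "subspace U" and V: "subspace V" and UV: "U \<subseteq> V" and fV: "finite V"
  shows "num_subspaces TYPE('a) (dim V - dim U) \<le> card {W. subspace W \<and> U \<subseteq> W \<and> W \<subseteq> V}"
proof -
  obtain bU where bU: "bU \<subseteq> U" "independent bU" "U \<subseteq> span bU" "card bU = dim U"
    by (rule basis_exists)
  obtain B where B: "bU \<subseteq> B" "B \<subseteq> V" "independent B" "V \<subseteq> span B"
    using maximal_independent_subset_extend[of bU V] bU UV by blast
  have cB: "card B = dim V" using basis_card_eq_dim B by blast
  have fB: "finite B" using fV B finite_subset by blast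
  define m where "m = dim V - dim U"
  define C where "C = B - bU"
  have cC: "card C = m" unfolding C_def m_def using card_Diff_subset[OF finite_subset[OF B(1) fB] B(1)] cB bU(4) by simp
  obtain g where g: "bij_betw g {..<m} C"
    using ex_bij_betw_nat_finite[of C] fB cC unfolding C_def by (auto simp: atLeast0LessThan)
  have gB: "\<And>i. i < m \<Longrightarrow> g i \<in> B" and gnU: "\<And>i. i < m \<Longrightarrow> g i \<notin> bU"
    using g unfolding bij_betw_def C_def by auto
  have ginj: "inj_on g {..<m}" using g unfolding bij_betw_def by auto
  define L where "L w = (\<Sum>i<m. w i *s g i)" for w :: "nat \<Rightarrow> 'a"
  have Ladd: "L (\<lambda>i. v i + w i) = L v + L w" for v w
    by (simp add: L_def scale_left_distrib sum.distrib)
  have Lscale: "L (\<lambda>i. c * v i) = c *s L v" for c v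
    by (simp add: L_def scale_sum_right)
  have Ldiff: "L (\<lambda>i. v i - w i) = L v - L w" for v w
    by (simp add: L_def scale_left_diff_distrib sum_subtractf)
  have Lzero: "L (\<lambda>i. 0) = 0" by (simp add: L_def)
  have LV: "L w \<in> V" for w
    unfolding L_def using gB B(2) by (intro subspace_sum[OF V] subspace_scale[OF V]) auto
  have key: "w = (\<lambda>i. 0)" if supp: "\<forall>i\<ge>m. w i = 0" and LU: "L w \<in> U" for w
  proof
    fix j show "w j = 0"
    proof (cases "j < m")
      case False then show ?thesis using supp by auto
    next
      case True
      have "representation B (L w) (g j) = (\<Sum>i<m. w i * representation B (g i) (g j))"
      proof -
        have sp: "\<And>i. i \<in> {..<m} \<Longrightarrow> w i *s g i \<in> span B" using gB by (auto intro: span_scale span_base)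
        have rs: "representation B (sum (\<lambda>i. w i *s g i) {..<m}) = (\<lambda>b. \<Sum>i\<in>{..<m}. representation B (w i *s g i) b)"
          by (rule representation_sum[OF B(3) sp])
        show ?thesis unfolding L_def rs
          using gB by (intro sum.cong) (simp_all add: representation_scale[OF B(3) span_base])
      qed
      also have "\<dots> = (\<Sum>i<m. if i = j then w i else 0)"
        using gB ginj True by (intro sum.cong) (auto simp: representation_basis[OF B(3)] inj_on_def)
      also have "\<dots> = w j" using True by simp
      finally have 1: "representation B (L w) (g j) = w j" .
      have "representation B (L w) = representation bU (L w)"
        using representation_extend[OF B(3) _ B(1)] LU bU(3) by blast
      moreover have "representation bU (L w) (g j) = 0"
        using representation_ne_zero gnU True by blast
      ultimately show ?thesis using 1 by simp
    qed
  qed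
  define S where "S = {W :: (nat \<Rightarrow> 'a) set.
      W \<subseteq> {v. \<forall>i\<ge>m. v i = 0} \<and> (\<lambda>i. 0) \<in> W \<and>
      (\<forall>v\<in>W. \<forall>w\<in>W. (\<lambda>i. v i + w i) \<in> W) \<and>
      (\<forall>c. \<forall>v\<in>W. (\<lambda>i. c * v i) \<in> W)}"
  define T where "T = {W. subspace W \<and> U \<subseteq> W \<and> W \<subseteq> V}"
  define \<Phi> where "\<Phi> W = {u + L w | u w. u \<in> U \<and> w \<in> W}" for W
  have fT: "finite T" unfolding T_def using fV by (auto intro: finite_subset[of _ "Pow V"])
  have img: "\<Phi> W \<in> T" if "W \<in> S" for W
  proof -
    have W: "(\<lambda>i. 0) \<in> W" "\<And>v w. v\<in>W \<Longrightarrow> w\<in>W \<Longrightarrow> (\<lambda>i. v i + w i) \<in> W"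
        "\<And>c v. v\<in>W \<Longrightarrow> (\<lambda>i. c * v i) \<in> W" using that unfolding S_def by auto
    have "subspace (\<Phi> W)" unfolding subspace_def \<Phi>_def
    proof (intro conjI ballI allI)
      show "0 \<in> {u + L w |u w. u \<in> U \<and> w \<in> W}"
        using W(1) subspace_0[OF U] Lzero by force
    next
      fix x y assume "x \<in> {u + L w |u w. u \<in> U \<and> w \<in> W}" "y \<in> {u + L w |u w. u \<in> U \<and> w \<in> W}"
      then obtain u1 w1 u2 w2 where "x = u1 + L w1" "y = u2 + L w2" "u1 \<in> U" "u2 \<in> U" "w1 \<in> W" "w2 \<in> W" by blast
      then show "x + y \<in> {u + L w |u w. u \<in> U \<and> w \<in> W}"
        using Ladd[of w1 w2] W(2)[of w1 w2] subspace_add[OF U] 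
        by (intro CollectI exI[of _ "u1+u2"] exI[of _ "\<lambda>i. w1 i + w2 i"]) (auto simp: algebra_simps)
    next
      fix c x assume "x \<in> {u + L w |u w. u \<in> U \<and> w \<in> W}"
      then obtain u1 w1 where "x = u1 + L w1" "u1 \<in> U" "w1 \<in> W" by blast
      then show "c *s x \<in> {u + L w |u w. u \<in> U \<and> w \<in> W}"
        using Lscale[of c w1] W(3)[of w1 c] subspace_scale[OF U]
        by (intro CollectI exI[of _ "c *s u1"] exI[of _ "\<lambda>i. c * w1 i"]) (auto simp: algebra_simps)
    qed
    moreover have "U \<subseteq> \<Phi> W" unfolding \<Phi>_def using W(1) Lzero by force
    moreover have "\<Phi> W \<subseteq> V" unfolding \<Phi>_def using UV LV subspace_add[OF V] by blast
    ultimately show ?thesis unfolding T_def by blast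
  qed
  have sub: "W1 \<subseteq> W2" if "W1 \<in> S" "W2 \<in> S" "\<Phi> W1 = \<Phi> W2" for W1 W2
  proof
    fix w1 assume w1: "w1 \<in> W1"
    have "0 + L w1 \<in> \<Phi> W1" unfolding \<Phi>_def using w1 subspace_0[OF U] by blast
    then have "L w1 \<in> \<Phi> W2" using that by simp
    then obtain u w2 where uw: "L w1 = u + L w2" "u \<in> U" "w2 \<in> W2" unfolding \<Phi>_def by blast
    have "L (\<lambda>i. w1 i - w2 i) \<in> U" using uw Ldiff[of w1 w2] by (simp add: algebra_simps)
    moreover have "\<forall>i\<ge>m. w1 i - w2 i = 0" 
    proof (intro allI impI)
      fix i assume "m \<le> i"
      have "W1 \<subseteq> {v. \<forall>i\<ge>m. v i = 0}" "W2 \<subseteq> {v. \<forall>i\<ge>m. v i = 0}"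
        using that(1,2) unfolding S_def by simp_all
      then have "w1 \<in> {v. \<forall>i\<ge>m. v i = 0}" "w2 \<in> {v. \<forall>i\<ge>m. v i = 0}"
        using w1 uw(3) by auto
      then show "w1 i - w2 i = 0" using \<open>m \<le> i\<close> by simp
    qed
    ultimately have "(\<lambda>i. w1 i - w2 i) = (\<lambda>i. 0)" by (rule key[rotated])
    then have "\<forall>i. w1 i - w2 i = 0" by (simp add: fun_eq_iff)
    then have "w1 = w2" by (simp add: fun_eq_iff)
    then show "w1 \<in> W2" using uw by simp
  qed
  have "inj_on \<Phi> S" unfolding inj_on_def using sub by blast
  then have "card S \<le> card T" using card_inj_on_le[of \<Phi> S T] img fT by blast
  then show ?thesis unfolding num_subspaces_def S_def T_def m_def .
qed

end


lemma annN_subspace: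
  assumes "is_algebra sc"
  shows "module.subspace sc (annN k :: 'a::comm_ring set)"
proof -
  interpret vector_space sc using assms unfolding is_algebra_def by blast
  have alg: "\<And>c x y. sc c (x * y) = x * sc c y" using assms unfolding is_algebra_def by blast
  show ?thesis
  proof (induction k)
    case 0 then show ?case by (simp add: subspace_def)
  next
    case (Suc k)
    show ?case unfolding subspace_def
    proof (intro conjI ballI allI)
      show "0 \<in> (annN (Suc k) :: 'a set)" using subspace_0[OF Suc] by simp
    next
      fix x y :: 'a assume "x \<in> annN (Suc k)" "y \<in> annN (Suc k)"
      then show "x + y \<in> annN (Suc k)" using subspace_add[OF Suc] by (simp add: distrib_left)
    next
      fix c and x :: 'a assume "x \<in> annN (Suc k)"
      then show "sc c x \<in> annN (Suc k)" using subspace_scale[OF Suc] by (simp add: alg[symmetric])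
    qed
  qed
qed

lemma annN_Suc_mono: "annN k \<subseteq> (annN (Suc k) :: 'a::comm_ring set)"
proof (induction k)
  case 0 then show ?case by auto
next
  case (Suc k) then show ?case by auto
qed

lemma annN_mono: "k \<le> l \<Longrightarrow> annN k \<subseteq> (annN l :: 'a::comm_ring set)"
proof (induction rule: dec_induct)
  case base then show ?case by simp
next
  case (step n) then show ?case using annN_Suc_mono[where 'a='a, of n] by blast
qed

lemma finite_span_UNIV:
  fixes sc :: "'k::{field,finite} \<Rightarrow> 'a::comm_ring \<Rightarrow> 'a"
  assumes "is_algebra sc" "finite B" "module.span sc B = UNIV"
  shows "finite (UNIV :: 'a set)"
proof -
  interpret vector_space sc using assms unfolding is_algebra_def by blast
  define F where "F = (\<lambda>u. \<Sum>v\<in>B. sc (u v) v)"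
  have "UNIV = range F" using span_finite[OF assms(2)] assms(3) unfolding F_def by simp
  also have "\<dots> \<subseteq> F ` (B \<rightarrow>\<^sub>E UNIV)"
  proof
    fix x assume "x \<in> range F"
    then obtain u where x: "x = F u" by blast
    have "F u = F (restrict u B)" unfolding F_def by (intro sum.cong) auto
    moreover have "restrict u B \<in> B \<rightarrow>\<^sub>E UNIV" by simp
    ultimately show "x \<in> F ` (B \<rightarrow>\<^sub>E UNIV)" using x by (metis image_eqI)
  qed
  finally have "UNIV \<subseteq> F ` (B \<rightarrow>\<^sub>E UNIV)" .
  moreover have "finite (F ` (B \<rightarrow>\<^sub>E (UNIV :: 'k set)))"
    by (intro finite_imageI finite_PiE assms(2)) simp
  ultimately show ?thesis by (rule finite_subset)
qed

theorem proposition3p1: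
  fixes sc :: "'k::{field,finite} \<Rightarrow> 'a::comm_ring \<Rightarrow> 'a"
    and p e :: nat
  assumes "prime p" and "card (UNIV :: 'k set) = p"
    and "is_algebra sc"
    and "\<exists>B. finite B \<and> module.span sc B = UNIV"
    and "\<exists>x::'a. x \<noteq> 0"
    and "e \<ge> 1"
    and "alg_pow sc e \<noteq> {0}" and "alg_pow sc (e + 1) = {0}"
  shows "int (num_subspaces TYPE('k) (vector_space.dim sc (annN 1 :: 'a set)
              - vector_space.dim sc (annN 0 :: 'a set)))
         + (\<Sum>r = 2..e. int (num_subspaces TYPE('k) (vector_space.dim sc (annN r :: 'a set)
              - vector_space.dim sc (annN (r - 1) :: 'a set))) - 1)
         \<le> int (card {I. alg_ideal sc I})"
proof -
  interpret vector_space sc using assms(3) unfolding is_algebra_def by blast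
  have finA: "finite (UNIV :: 'a set)" using finite_span_UNIV[OF assms(3)] assms(4) by blast
  define T where "T r = {W :: 'a set. subspace W \<and> annN (r - 1) \<subseteq> W \<and> W \<subseteq> annN r}" for r
  define s where "s r = num_subspaces TYPE('k) (dim (annN r :: 'a set) - dim (annN (r - 1) :: 'a set))" for r
  define Id where "Id = {I. alg_ideal sc I}"
  have finId: "finite Id" unfolding Id_def using finA
    by (auto intro: finite_subset[of _ "Pow UNIV"])
  have TId: "T r \<subseteq> Id" if "r \<ge> 1" for r
  proof
    fix W assume W: "W \<in> T r"
    have "x * a \<in> W" if "a \<in> W" for a x
    proof -
      obtain q where q: "r = Suc q" using \<open>r \<ge> 1\<close> by (cases r) auto
      have "a \<in> annN r" using W that unfolding T_def by blast
      then have "x * a \<in> annN q" using q by simp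
      then have "x * a \<in> annN (r - 1)" using q by simp
      then show ?thesis using W unfolding T_def by blast
    qed
    then show "W \<in> Id" using W unfolding Id_def T_def alg_ideal_def by blast
  qed
  have finT: "finite (T r)" if "r \<ge> 1" for r using finite_subset[OF TId[OF that] finId] .
  have sT: "s r \<le> card (T r)" for r
    unfolding s_def T_def
    by (rule count_between[OF annN_subspace[OF assms(3)] annN_subspace[OF assms(3)] annN_mono])
       (auto intro: finite_subset[OF _ finA])
  have memT: "annN (r - 1) \<in> T r" for r
  proof -
    have "subspace (annN (r - 1) :: 'a set)" by (rule annN_subspace[OF assms(3)])
    moreover have "annN (r - 1) \<subseteq> (annN r :: 'a set)" by (rule annN_mono) simp
    ultimately show ?thesis unfolding T_def by blast
  qed
  define G where "G r = T r - {annN (r - 1)}" for r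
  have cG: "int (card (G r)) = int (card (T r)) - 1" if "r \<ge> 1" for r
  proof -
    have "card (T r) \<noteq> 0" using memT[of r] finT[OF that] by (metis card_0_eq empty_iff)
    moreover have "card (G r) = card (T r) - 1"
      unfolding G_def using memT[of r] finT[OF that] by (simp add: card_Diff_singleton)
    ultimately show ?thesis by (simp add: of_nat_diff)
  qed
  have disj: "G r \<inter> G r' = {}" if "2 \<le> r" "r < r'" for r r'
  proof (rule ccontr)
    assume "G r \<inter> G r' \<noteq> {}"
    then obtain W where "W \<in> G r" "W \<in> G r'" by blast
    then have "W \<in> T r" "W \<in> T r'" "W \<noteq> annN (r' - 1)" unfolding G_def by blast+
    then have "W \<subseteq> annN r" "annN (r' - 1) \<subseteq> W" "W \<noteq> annN (r' - 1)" unfolding T_def by blast+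
    moreover have "annN r \<subseteq> annN (r' - 1)" using that by (intro annN_mono) simp
    ultimately show False by blast
  qed
  have disj1: "T 1 \<inter> G r = {}" if "2 \<le> r" for r
  proof (rule ccontr)
    assume "T 1 \<inter> G r \<noteq> {}"
    then obtain W where "W \<in> T 1" "W \<in> G r" by blast
    then have "W \<in> T 1" "W \<in> T r" "W \<noteq> annN (r - 1)" unfolding G_def by blast+
    then have "W \<subseteq> annN 1" "annN (r - 1) \<subseteq> W" "W \<noteq> annN (r - 1)" unfolding T_def by blast+
    moreover have "annN 1 \<subseteq> annN (r - 1)" using that by (intro annN_mono) simp
    ultimately show False by blast
  qed
  have finG: "finite (G r)" if "r \<ge> 1" for r using finT[OF that] unfolding G_def by simp
  have cU: "card (\<Union>r\<in>{2..e}. G r) = (\<Sum>r = 2..e. card (G r))"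
  proof (rule card_UN_disjoint)
    show "finite {2..e}" by simp
    show "\<forall>i\<in>{2..e}. finite (G i)" using finG by simp
    show "\<forall>i\<in>{2..e}. \<forall>j\<in>{2..e}. i \<noteq> j \<longrightarrow> G i \<inter> G j = {}"
    proof (intro ballI impI)
      fix i j assume i: "i \<in> {2..e}" and j: "j \<in> {2..e}" and ij: "i \<noteq> j"
      show "G i \<inter> G j = {}"
      proof (cases "i < j")
        case True then show ?thesis using disj[of i j] i by simp
      next
        case False then have "j < i" using ij by simp
        then show ?thesis using disj[of j i] j by (simp add: Int_commute)
      qed
    qed
  qed
  have cU2: "card (T 1 \<union> (\<Union>r\<in>{2..e}. G r)) = card (T 1) + card (\<Union>r\<in>{2..e}. G r)"
  proof (rule card_Un_disjoint)
    show "finite (T 1)" using finT by simp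
    show "finite (\<Union>r\<in>{2..e}. G r)" using finG by simp
    show "T 1 \<inter> (\<Union>r\<in>{2..e}. G r) = {}" using disj1 by (simp add: Int_UN_distrib)
  qed
  have GId: "G r \<subseteq> Id" if "r \<in> {2..e}" for r
  proof -
    have "G r \<subseteq> T r" unfolding G_def by (rule Diff_subset)
    also have "\<dots> \<subseteq> Id" by (rule TId) (use that in simp)
    finally show ?thesis .
  qed
  have sub: "T 1 \<union> (\<Union>r\<in>{2..e}. G r) \<subseteq> Id"
    using TId[of 1] GId by (intro Un_least UN_least) auto
  have "int (s 1) + (\<Sum>r = 2..e. int (s r) - 1) \<le> int (card (T 1)) + (\<Sum>r = 2..e. int (card (G r)))"
  proof (intro add_mono sum_mono)
    show "int (s 1) \<le> int (card (T 1))" using sT[of 1] by simp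
  next
    fix r assume r: "r \<in> {2..e}"
    have "int (s r) \<le> int (card (T r))" using sT[of r] by simp
    moreover have "int (card (G r)) = int (card (T r)) - 1" using cG[of r] r by simp
    ultimately show "int (s r) - 1 \<le> int (card (G r))" by linarith
  qed
  also have "\<dots> = int (card (T 1 \<union> (\<Union>r\<in>{2..e}. G r)))" using cU cU2 by simp
  also have "\<dots> \<le> int (card Id)" using card_mono[OF finId sub] by simp
  finally show ?thesis unfolding s_def Id_def by simp
qed

end
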